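(* As $n\to\infty$ the polynomials $K_n(q,t)$ converge coefficientwise to a formal power series $K(q,t)$, and $$K(q,t)=\sum_{p=0}^{\infty}q^{2p^2}t^{2p(p-1)}\left(1+q^{8p+12}t^{8p+5}\right)\prod_{j=1}^{p}\frac{1+q^{2j+4}t^{2j+1}}{1-q^{2j}t^{2j}}.$$
   Context: For $n\ge1$, call a sequence $(s_0,\dots,s_{n-1})\in\{0,1\}^n$ (positions numbered from 0) admissible if every maximal block of consecutive 1's has length 1 or 2, except that a maximal block of length 3 is allowed if it starts at position 0. The weight of an admissible sequence is the product over its maximal blocks of 1's of: $q^{2k+2}t^{2k}$ for a block of length 1 at position $k$; $q^{2k+8}t^{2k+3}$ for a block of length 2 starting at position $k$; $q^{12}t^5$ for the block of length 3 at positions $0,1,2$. $K_n(q,t)$ is the sum of the weights of all admissible sequences of length $n$. *)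

theory Defs
  imports "HOL-Computational_Algebra.Formal_Power_Series"
begin

text \<open>Bivariate formal power series in q and t are modelled as power series in q
whose coefficients are power series in t, with rational coefficients:
type rat fps fps.  The coefficient of q^a t^b in F is fps_nth (fps_nth F a) b.\<close>

definition mono :: "nat \<Rightarrow> nat \<Rightarrow> rat fps fps" where
  "mono a b = fps_const (fps_X ^ b) * fps_X ^ a"

definition max_blocks :: "bool list \<Rightarrow> (nat \<times> nat) set" where
  "max_blocks s = {(k, l). 1 \<le> l \<and> k + l \<le> length s
       \<and> (\<forall>i. k \<le> i \<and> i < k + l \<longrightarrow> s ! i)
       \<and> (k = 0 \<or> \<not> s ! (k - 1))
       \<and> (k + l = length s \<or> \<not> s ! (k + l))}"

definition admissible :: "bool list \<Rightarrow> bool" where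
  "admissible s \<longleftrightarrow> (\<forall>(k, l) \<in> max_blocks s. l = 1 \<or> l = 2 \<or> (l = 3 \<and> k = 0))"

definition block_weight :: "nat \<Rightarrow> nat \<Rightarrow> rat fps fps" where
  "block_weight k l =
     (if l = 1 then mono (2*k + 2) (2*k)
      else if l = 2 then mono (2*k + 8) (2*k + 3)
      else mono 12 5)"

definition seq_weight :: "bool list \<Rightarrow> rat fps fps" where
  "seq_weight s = (\<Prod>(k, l) \<in> max_blocks s. block_weight k l)"

definition Kpoly :: "nat \<Rightarrow> rat fps fps" where
  "Kpoly n = (\<Sum>s \<in> {s. length s = n \<and> admissible s}. seq_weight s)"

definition Kterm :: "nat \<Rightarrow> rat fps fps" where
  "Kterm p = mono (2*p^2) (2*p*(p - 1)) * (1 + mono (8*p + 12) (8*p + 5))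
     * (\<Prod>j = 1..p. (1 + mono (2*j + 4) (2*j + 1)) * inverse (1 - mono (2*j) (2*j)))"

end

theory Submission
  imports Defs
begin
unbundle fps_syntax



lemma mem_mb: "(k,l) \<in> max_blocks s \<longleftrightarrow> 1 \<le> l \<and> k + l \<le> length s
       \<and> (\<forall>i. k \<le> i \<and> i < k + l \<longrightarrow> s ! i)
       \<and> (k = 0 \<or> \<not> s ! (k - 1))
       \<and> (k + l = length s \<or> \<not> s ! (k + l))"
  unfolding max_blocks_def by simp

lemma mb_01: "(0,1) \<in> max_blocks (x#s) \<longleftrightarrow> x \<and> (s = [] \<or> \<not> hd s)"
  unfolding max_blocks_def by (cases s) auto

lemma mb_0SS: "(0,Suc (Suc j)) \<in> max_blocks (x#s) \<longleftrightarrow> x \<and> (0, Suc j) \<in> max_blocks s"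
proof -
  have A: "(\<forall>i. 0 \<le> i \<and> i < 0 + Suc (Suc j) \<longrightarrow> (x#s) ! i) \<longleftrightarrow> x \<and> (\<forall>i. 0 \<le> i \<and> i < 0 + Suc j \<longrightarrow> s ! i)"
  proof
    assume H: "\<forall>i. 0 \<le> i \<and> i < 0 + Suc (Suc j) \<longrightarrow> (x#s) ! i"
    have "x" using H[rule_format, of 0] by simp
    moreover have "\<forall>i. 0 \<le> i \<and> i < 0 + Suc j \<longrightarrow> s ! i"
    proof (intro allI impI)
      fix i assume "0 \<le> i \<and> i < 0 + Suc j"
      then show "s ! i" using H[rule_format, of "Suc i"] by simp
    qed
    ultimately show "x \<and> (\<forall>i. 0 \<le> i \<and> i < 0 + Suc j \<longrightarrow> s ! i)" by blast
  next
    assume H: "x \<and> (\<forall>i. 0 \<le> i \<and> i < 0 + Suc j \<longrightarrow> s ! i)"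
    show "\<forall>i. 0 \<le> i \<and> i < 0 + Suc (Suc j) \<longrightarrow> (x#s) ! i"
    proof (intro allI impI)
      fix i assume "0 \<le> i \<and> i < 0 + Suc (Suc j)"
      then show "(x#s) ! i" using H by (cases i) auto
    qed
  qed
  have B: "(0 + Suc (Suc j) = length (x#s) \<or> \<not> (x#s) ! (0 + Suc (Suc j))) \<longleftrightarrow>
           (0 + Suc j = length s \<or> \<not> s ! (0 + Suc j))" by simp
  have C: "0 + Suc (Suc j) \<le> length (x#s) \<longleftrightarrow> 0 + Suc j \<le> length s" by simp
  show ?thesis unfolding mem_mb A B C by (simp, blast)
qed

lemma mb_0:
  "(0,l) \<in> max_blocks (x#s) \<longleftrightarrow> x \<and> ((l = 1 \<and> (s = [] \<or> \<not> hd s)) \<or> (2 \<le> l \<and> (0, l - 1) \<in> max_blocks s))"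
proof (cases l)
  case 0 then show ?thesis by (simp add: mem_mb)
next
  case (Suc j) then show ?thesis
    by (cases j) (simp_all add: mb_01[unfolded One_nat_def] mb_0SS)
qed

lemma mb_Suc:
  "(Suc k,l) \<in> max_blocks (x#s) \<longleftrightarrow> (k,l) \<in> max_blocks s \<and> (k = 0 \<longrightarrow> \<not> x)"
proof -
  have A: "(\<forall>i. Suc k \<le> i \<and> i < Suc k + l \<longrightarrow> (x#s) ! i) \<longleftrightarrow> (\<forall>i. k \<le> i \<and> i < k + l \<longrightarrow> s ! i)"
  proof
    assume H: "\<forall>i. Suc k \<le> i \<and> i < Suc k + l \<longrightarrow> (x#s) ! i"
    show "\<forall>i. k \<le> i \<and> i < k + l \<longrightarrow> s ! i"
    proof (intro allI impI)
      fix i assume "k \<le> i \<and> i < k + l"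
      then show "s ! i" using H[rule_format, of "Suc i"] by simp
    qed
  next
    assume H: "\<forall>i. k \<le> i \<and> i < k + l \<longrightarrow> s ! i"
    show "\<forall>i. Suc k \<le> i \<and> i < Suc k + l \<longrightarrow> (x#s) ! i"
    proof (intro allI impI)
      fix i assume "Suc k \<le> i \<and> i < Suc k + l"
      then show "(x#s) ! i" using H[rule_format, of "i - 1"] by (cases i) auto
    qed
  qed
  have B: "(Suc k + l = length (x#s) \<or> \<not> (x#s) ! (Suc k + l)) \<longleftrightarrow> (k + l = length s \<or> \<not> s ! (k + l))" by simp
  have C: "Suc k + l \<le> length (x#s) \<longleftrightarrow> k + l \<le> length s" by simp
  have D: "(Suc k = 0 \<or> \<not> (x#s) ! (Suc k - 1)) \<longleftrightarrow> (k = 0 \<or> \<not> s ! (k - 1)) \<and> (k = 0 \<longrightarrow> \<not> x)"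
    by (cases k) auto
  show ?thesis unfolding mem_mb A B C D by blast
qed

definition sh :: "nat \<Rightarrow> nat \<times> nat \<Rightarrow> nat \<times> nat" where
  "sh r = (\<lambda>(k,l). (k + r, l))"

lemma mem_sh: "(k,l) \<in> sh r ` A \<longleftrightarrow> r \<le> k \<and> (k - r, l) \<in> A"
proof
  assume "(k,l) \<in> sh r ` A"
  then obtain a b where "(a,b) \<in> A" "(k,l) = (a + r, b)" unfolding sh_def by auto
  then show "r \<le> k \<and> (k - r, l) \<in> A" by auto
next
  assume H: "r \<le> k \<and> (k - r, l) \<in> A"
  have "(k,l) = sh r (k - r, l)" using H unfolding sh_def by auto
  then show "(k,l) \<in> sh r ` A" using H by blast
qed

lemma mb_Nil: "max_blocks [] = {}"
  by (auto simp: max_blocks_def)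

lemma pair_ext: "(\<And>k l. (k,l) \<in> A \<longleftrightarrow> (k,l) \<in> B) \<Longrightarrow> A = B"
  by auto


lemmas mbs = mb_0 mb_Suc mem_sh mb_Nil

lemma mb_F: "max_blocks (False#s) = sh 1 ` max_blocks s"
  apply (rule pair_ext)
  subgoal for k l by (cases k) (auto simp: mbs)
  done

lemma mb_T: "max_blocks [True] = {(0,1)}"
  apply (rule pair_ext)
  subgoal for k l by (cases k) (auto simp: mbs)
  done

lemma mb_TF: "max_blocks (True#False#s) = insert (0,1) (sh 2 ` max_blocks s)"
  apply (rule pair_ext)
  subgoal for k l
    apply (cases k)
     apply (simp add: mbs)
    subgoal for k' by (cases k') (auto simp: mbs)
    done
  done


lemma mb_cons: "(k,l) \<in> max_blocks (x#s) \<longleftrightarrow>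
  (if k = 0 then x \<and> ((l = 1 \<and> (s = [] \<or> \<not> hd s)) \<or> (2 \<le> l \<and> (0, l - 1) \<in> max_blocks s))
   else (k - 1,l) \<in> max_blocks s \<and> (k = 1 \<longrightarrow> \<not> x))"
  by (cases k) (simp_all add: mb_0 mb_Suc)

lemmas mbs2 = mb_cons mem_sh mb_Nil

lemma mb_TT: "max_blocks [True,True] = {(0,2)}"
  by (rule pair_ext) (auto simp: mbs2 numeral_eq_Suc)

lemma mb_TTF: "max_blocks (True#True#False#s) = insert (0,2) (sh 3 ` max_blocks s)"
  by (rule pair_ext) (auto simp: mbs2 numeral_eq_Suc)

lemma mb_TTT: "max_blocks [True,True,True] = {(0,3)}"
  by (rule pair_ext) (auto simp: mbs2 numeral_eq_Suc)

lemma mb_TTTF: "max_blocks (True#True#True#False#s) = insert (0,3) (sh 4 ` max_blocks s)"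
  by (rule pair_ext) (auto simp: mbs2 numeral_eq_Suc)

lemma mb_T_ex: "\<exists>j. (0,Suc j) \<in> max_blocks (True#s)"
proof (induction s)
  case Nil then show ?case by (simp add: mb_T)
next
  case (Cons y s)
  show ?case
  proof (cases y)
    case False
    have "(0,1) \<in> max_blocks (True#y#s)" using False by (simp add: mb_01[unfolded One_nat_def])
    then show ?thesis by auto
  next
    case True
    from Cons.IH obtain j where "(0,Suc j) \<in> max_blocks (True#s)" by blast
    then have "(0, Suc (Suc j)) \<in> max_blocks (True#y#s)" using True by (simp only: mb_0SS)
    then show ?thesis by blast
  qed
qed

lemma mb_TTT_ex: "\<exists>l\<ge>3. (0,l) \<in> max_blocks (True#True#True#s)"
proof -
  obtain j where "(0,Suc j) \<in> max_blocks (True#s)" using mb_T_ex by blast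
  then have "(0, Suc (Suc (Suc j))) \<in> max_blocks (True#True#True#s)" by (simp only: mb_0SS)
  then show ?thesis by (intro exI[of _ "Suc (Suc (Suc j))"]) auto
qed

lemma mb_TTTT_ex: "\<exists>l\<ge>4. (0,l) \<in> max_blocks (True#True#True#True#s)"
proof -
  obtain j where "(0,Suc j) \<in> max_blocks (True#s)" using mb_T_ex by blast
  then have "(0, Suc (Suc (Suc (Suc j)))) \<in> max_blocks (True#True#True#True#s)" by (simp only: mb_0SS)
  then show ?thesis by (intro exI[of _ "Suc (Suc (Suc (Suc j)))"]) auto
qed

lemma mb_03: "(0,3) \<in> max_blocks s \<Longrightarrow> \<exists>r. s = True#True#True#r"
  unfolding mem_mb
  apply (cases s, simp)
  subgoal for a s1 apply (cases s1, simp)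
    subgoal for b s2 apply (cases s2, simp)
      subgoal for c s3 by (auto dest: spec[of _ 0] spec[of _ 1] spec[of _ 2])
      done
    done
  done

lemma finite_mb: "finite (max_blocks s)"
proof -
  have "max_blocks s \<subseteq> {..length s} \<times> {..length s}" by (auto simp: max_blocks_def)
  then show ?thesis by (rule finite_subset) auto
qed


definition b1 :: "nat \<Rightarrow> rat fps fps" where "b1 m = mono (2*m+2) (2*m)"
definition b2 :: "nat \<Rightarrow> rat fps fps" where "b2 m = mono (2*m+8) (2*m+3)"
definition b3 :: "rat fps fps" where "b3 = mono 12 5"

fun wf :: "nat \<Rightarrow> bool list \<Rightarrow> rat fps fps" where
  "wf m [] = 1"
| "wf m (False#s) = wf (Suc m) s"
| "wf m [True] = b1 m"
| "wf m (True#False#s) = b1 m * wf (m+2) s"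
| "wf m [True,True] = b2 m"
| "wf m (True#True#False#s) = b2 m * wf (m+3) s"
| "wf m (True#True#True#s) = 0"

definition ok :: "bool list \<Rightarrow> bool" where
  "ok s \<longleftrightarrow> (\<forall>(k,l)\<in>max_blocks s. l = 1 \<or> l = 2)"

definition wt :: "nat \<Rightarrow> bool list \<Rightarrow> rat fps fps" where
  "wt m s = (\<Prod>(k,l)\<in>max_blocks s. block_weight (k+m) l)"

lemma inj_sh: "inj_on (sh r) A"
  by (auto simp: inj_on_def sh_def)

lemma prod_sh: "(\<Prod>(k,l)\<in>sh r ` A. f k l) = (\<Prod>(k,l)\<in>A. f (k+r) l)"
  by (subst prod.reindex[OF inj_sh]) (simp add: sh_def case_prod_beta)

lemma ok_sh: "(\<forall>(k,l)\<in>sh r ` A. P l) \<longleftrightarrow> (\<forall>(k,l)\<in>A. P l)"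
  by (auto simp: sh_def)

lemma not_in_sh: "0 < r \<Longrightarrow> (0,l) \<notin> sh r ` A"
  by (auto simp: mem_sh)

lemma case_sh: "(case sh r x of (k, l) \<Rightarrow> f k l) = (case x of (k,l) \<Rightarrow> f (k+r) l)"
  by (cases x) (simp add: sh_def)

lemma wt_sh: "(\<Prod>(k,l)\<in>sh r ` A. block_weight (k+m) l) = (\<Prod>(k,l)\<in>A. block_weight (k+(m+r)) l)"
  by (simp add: prod_sh algebra_simps)

lemma bw1: "block_weight m 1 = b1 m" "block_weight m (Suc 0) = b1 m" by (simp_all add: block_weight_def b1_def)
lemma bw2: "block_weight m 2 = b2 m" by (simp add: block_weight_def b2_def)

lemma wf_eq: "wf m s = (if ok s then wt m s else 0)"
proof (induction m s rule: wf.induct)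
  case (1 m) then show ?case by (simp add: ok_def wt_def mb_Nil)
next
  case (2 m s) then show ?case
    by (simp add: ok_def wt_def mb_F wt_sh ok_sh case_sh)
next
  case (3 m) then show ?case by (simp add: ok_def wt_def mb_T bw1)
next
  case (4 m s)
  have "wt m (True#False#s) = b1 m * wt (m+2) s"
    unfolding wt_def mb_TF by (simp add: finite_mb not_in_sh wt_sh bw1)
  moreover have "ok (True#False#s) = ok s"
    unfolding ok_def mb_TF by (simp add: ok_sh case_sh)
  ultimately show ?case using 4 by simp
next
  case (5 m) then show ?case by (simp add: ok_def wt_def mb_TT bw2)
next
  case (6 m s)
  have "wt m (True#True#False#s) = b2 m * wt (m+3) s"
    unfolding wt_def mb_TTF by (simp add: finite_mb not_in_sh wt_sh bw2)
  moreover have "ok (True#True#False#s) = ok s"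
    unfolding ok_def mb_TTF by (simp add: ok_sh case_sh)
  ultimately show ?case using 6 by simp
next
  case (7 m s)
  obtain l where "l \<ge> 3" "(0,l) \<in> max_blocks (True#True#True#s)" using mb_TTT_ex by blast
  then have "\<not> ok (True#True#True#s)" unfolding ok_def by (intro notI) (drule bspec, assumption, auto)
  then show ?case by simp
qed


fun h3 :: "bool list \<Rightarrow> rat fps fps" where
  "h3 [] = b3"
| "h3 (False#s) = b3 * wf 4 s"
| "h3 (True#s) = 0"

definition hh :: "bool list \<Rightarrow> rat fps fps" where
  "hh s = (if take 3 s = [True,True,True] then h3 (drop 3 s) else 0)"

lemma hh_TTT[simp]: "hh (True#True#True#r) = h3 r"
  by (simp add: hh_def numeral_eq_Suc)

lemma hh_0: "\<not> (\<exists>r. s = True#True#True#r) \<Longrightarrow> hh s = 0"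
proof -
  assume H: "\<not> (\<exists>r. s = True#True#True#r)"
  have "take 3 s \<noteq> [True,True,True]"
  proof
    assume "take 3 s = [True,True,True]"
    then have "s = [True,True,True] @ drop 3 s" by (metis append_take_drop_id)
    then show False using H by simp
  qed
  then show ?thesis by (simp add: hh_def)
qed

lemma gw_eq: "wf 0 s + hh s = (if admissible s then seq_weight s else 0)"
proof (cases "\<exists>r. s = True#True#True#r")
  case True
  then obtain r where s: "s = True#True#True#r" by blast
  show ?thesis
  proof (cases r)
    case Nil
    then show ?thesis using s
      by (simp add: admissible_def seq_weight_def mb_TTT block_weight_def b3_def)
  next
    case (Cons x r')
    show ?thesis
    proof (cases x)
      case False
      have mb: "max_blocks s = insert (0,3) (sh 4 ` max_blocks r')" using s Cons False by (simp add: mb_TTTF)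
      have "admissible s \<longleftrightarrow> ok r'"
        unfolding admissible_def ok_def mb ball_simps ok_sh case_sh by simp
      moreover have "seq_weight s = b3 * wt 4 r'"
      proof -
        have "seq_weight s = block_weight 0 3 * (\<Prod>(k,l)\<in>sh 4 ` max_blocks r'. block_weight k l)"
          unfolding seq_weight_def mb by (simp add: finite_mb not_in_sh)
        also have "\<dots> = b3 * wt 4 r'"
          unfolding wt_def prod_sh by (simp add: block_weight_def b3_def)
        finally show ?thesis .
      qed
      ultimately show ?thesis using s Cons False by (simp add: wf_eq[of 4 r'])
    next
      case True
      have s': "s = True#True#True#True#r'" using True by (simp only: s Cons)
      obtain l where "l \<ge> 4" "(0,l) \<in> max_blocks (True#True#True#True#r')" using mb_TTTT_ex by blast
      then have "l \<ge> 4" "(0,l) \<in> max_blocks s" unfolding s' by auto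
      then have "\<not> admissible s" unfolding admissible_def by (intro notI) (drule bspec, assumption, auto)
      then show ?thesis using s Cons True by simp
    qed
  qed
next
  case False
  have "admissible s \<longleftrightarrow> ok s"
  proof
    assume "admissible s"
    show "ok s" unfolding ok_def
    proof (intro ballI)
      fix x assume x: "x \<in> max_blocks s"
      obtain k l where kl: "x = (k,l)" by fastforce
      have "l = 1 \<or> l = 2 \<or> (l = 3 \<and> k = 0)"
        using \<open>admissible s\<close> x kl unfolding admissible_def by auto
      moreover have "\<not> (l = 3 \<and> k = 0)"
      proof
        assume "l = 3 \<and> k = 0"
        then have "(0,3) \<in> max_blocks s" using x kl by simp
        then have "\<exists>r. s = True#True#True#r" by (rule mb_03)
        with False show False by (rule notE)
      qed
      ultimately show "case x of (k, l) \<Rightarrow> l = 1 \<or> l = 2" using kl by auto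
    qed
  next
    assume "ok s"
    then show "admissible s" unfolding admissible_def ok_def by blast
  qed
  moreover have "seq_weight s = wt 0 s" by (simp add: seq_weight_def wt_def)
  ultimately show ?thesis using False by (simp add: hh_0 wf_eq)
qed



definition L :: "nat \<Rightarrow> bool list set" where "L n = {s. length s = n}"

lemma finite_L: "finite (L n)"
  using finite_lists_length_eq[where A="UNIV :: bool set" and n=n] unfolding L_def by simp

lemma L_0: "L 0 = {[]}" by (auto simp: L_def)

lemma L_Suc: "L (Suc n) = Cons False ` L n \<union> Cons True ` L n"
proof (rule set_eqI)
  fix s show "s \<in> L (Suc n) \<longleftrightarrow> s \<in> Cons False ` L n \<union> Cons True ` L n"
  proof
    assume "s \<in> L (Suc n)"
    then obtain x r where s: "s = x # r" "length r = n" unfolding L_def by (cases s) auto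
    then show "s \<in> Cons False ` L n \<union> Cons True ` L n" unfolding L_def by (cases x) auto
  qed (auto simp: L_def)
qed

lemma sum_L_Suc: "(\<Sum>s\<in>L (Suc n). f s) = (\<Sum>s\<in>L n. f (False#s)) + (\<Sum>s\<in>L n. f (True#s))"
proof -
  have "(\<Sum>s\<in>L (Suc n). f s) = (\<Sum>s\<in>Cons False ` L n. f s) + (\<Sum>s\<in>Cons True ` L n. f s)"
    unfolding L_Suc by (rule sum.union_disjoint) (auto simp: finite_L)
  also have "\<dots> = (\<Sum>s\<in>L n. f (False#s)) + (\<Sum>s\<in>L n. f (True#s))"
    by (simp add: sum.reindex)
  finally show ?thesis .
qed

definition S :: "nat \<Rightarrow> nat \<Rightarrow> rat fps fps" where "S m n = (\<Sum>s\<in>L n. wf m s)"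

lemma S_0: "S m 0 = 1" by (simp add: S_def L_0)

lemma T2_eq: "(\<Sum>s\<in>L n. wf m (True#True#s)) = (if n = 0 then b2 m else b2 m * S (m+3) (n - 1))"
proof (cases n)
  case 0 then show ?thesis by (simp add: L_0)
next
  case (Suc k) then show ?thesis
    by (simp add: sum_L_Suc S_def sum_distrib_left)
qed

lemma T1_eq: "(\<Sum>s\<in>L n. wf m (True#s)) = (if n = 0 then b1 m else b1 m * S (m+2) (n - 1)
    + (if n = 1 then b2 m else b2 m * S (m+3) (n - 2)))"
proof (cases n)
  case 0 then show ?thesis by (simp add: L_0)
next
  case (Suc k) then show ?thesis
    by (simp add: sum_L_Suc S_def sum_distrib_left T2_eq[unfolded S_def])
qed

lemma S_Suc: "S m (Suc n) = S (Suc m) n + (if n = 0 then b1 m else b1 m * S (m+2) (n - 1)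
    + (if n = 1 then b2 m else b2 m * S (m+3) (n - 2)))"
  by (simp add: S_def sum_L_Suc T1_eq[unfolded S_def])

lemma hh_F: "hh (False#s) = 0" "hh (True#False#s) = 0" "hh (True#True#False#s) = 0"
  by (simp_all add: hh_def numeral_eq_Suc)

lemma h3_sum: "(\<Sum>s\<in>L (Suc n). h3 s) = b3 * S 4 n"
  unfolding sum_L_Suc S_def h3.simps by (simp add: sum_distrib_left)

lemma Kpoly_eq: "Kpoly (n + 4) = S 0 (n + 4) + b3 * S 4 n"
proof -
  have "Kpoly (n+4) = (\<Sum>s\<in>L (n+4). if admissible s then seq_weight s else 0)"
    unfolding Kpoly_def L_def using sum.inter_filter[OF finite_L, of seq_weight "n+4" admissible]
    by (simp add: L_def)
  also have "\<dots> = (\<Sum>s\<in>L (n+4). wf 0 s + hh s)" by (simp add: gw_eq)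
  also have "\<dots> = S 0 (n+4) + (\<Sum>s\<in>L (n+4). hh s)" by (simp add: sum.distrib S_def)
  also have "(\<Sum>s\<in>L (n+4). hh s) = b3 * S 4 n"
  proof -
    have e: "n+4 = Suc(Suc(Suc(Suc n)))" by simp
    have "(\<Sum>s\<in>L (Suc(Suc(Suc(Suc n)))). hh s) = (\<Sum>s\<in>L (Suc n). h3 s)"
      by (simp only: sum_L_Suc[of _ "Suc (Suc (Suc n))"] sum_L_Suc[of _ "Suc (Suc n)"]
          sum_L_Suc[of _ "Suc n"] hh_F hh_TTT) simp
    then show ?thesis unfolding e h3_sum .
  qed
  finally show ?thesis .
qed



lemma mono_mult: "Defs.mono a b * Defs.mono c d = Defs.mono (a+c) (b+d)"
proof -
  have "Defs.mono a b * Defs.mono c d = (fps_const (fps_X ^ b) * fps_const (fps_X ^ d)) * (fps_X ^ a * fps_X ^ c)"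
    unfolding Defs.mono_def by (simp add: ac_simps)
  also have "\<dots> = Defs.mono (a+c) (b+d)"
    unfolding Defs.mono_def fps_const_mult by (simp add: power_add)
  finally show ?thesis .
qed

lemma mono_00: "Defs.mono 0 0 = 1"
  by (simp add: Defs.mono_def)

lemma mono_nth: "(Defs.mono A B * f) $ a = (if a < A then 0 else fps_X ^ B * f $ (a - A))"
proof -
  have "Defs.mono A B * f = fps_const (fps_X ^ B) * (fps_X ^ A * f)"
    unfolding Defs.mono_def by (simp only: mult.assoc)
  then show ?thesis by (simp only: fps_mult_left_const_nth fps_X_power_mult_nth) simp
qed

lemma mono_cong_nth: "(\<And>i. i + A \<le> a \<Longrightarrow> f $ i = g $ i) \<Longrightarrow> (Defs.mono A B * f) $ a = (Defs.mono A B * g) $ a"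
  by (simp add: mono_nth)

lemma mult_cong_nth: "(\<And>i. i \<le> a \<Longrightarrow> f $ i = g $ i) \<Longrightarrow> (h * f) $ a = (h * g) $ a"
  unfolding fps_mult_nth by (rule sum.cong) auto

lemma mono_eq: "a = c \<Longrightarrow> b = d \<Longrightarrow> Defs.mono a b = Defs.mono c d" by simp

lemma inv1:
  assumes "k > 0"
  shows "(1 - Defs.mono k k) * inverse (1 - Defs.mono k k) = 1"
proof -
  let ?f = "1 - Defs.mono k k"
  have m0: "Defs.mono k k $ 0 = 0"
  proof -
    have "(Defs.mono k k * 1) $ 0 = 0" using assms by (simp only: mono_nth) simp
    then show ?thesis by simp
  qed
  have f0: "?f $ 0 = 1" using m0 by simp
  have "inverse ?f = fps_right_inverse ?f (inverse (?f $ 0))"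
    by (rule fps_inverse_def)
  also have "inverse (?f $ 0) = 1" unfolding f0 by (rule fps_inverse_one)
  finally have iv: "inverse ?f = fps_right_inverse ?f 1" .
  show ?thesis unfolding iv
    by (rule fps_right_inverse) (simp only: f0 mult_1_right)
qed

definition P :: "nat \<Rightarrow> rat fps fps" where
  "P p = (\<Prod>j = 1..p. (1 + Defs.mono (2*j + 4) (2*j + 1)) * inverse (1 - Defs.mono (2*j) (2*j)))"

definition u :: "nat \<Rightarrow> rat fps fps" where
  "u p = Defs.mono (2*p^2) (2*p*(p - 1)) * P p"

definition c :: "nat \<Rightarrow> nat \<Rightarrow> rat fps fps" where
  "c m p = u p * Defs.mono (2*m*p) (2*m*p)"

lemma P_Suc: "P (Suc p) = P p * ((1 + Defs.mono (2*p + 6) (2*p + 3)) * inverse (1 - Defs.mono (2*(Suc p)) (2*(Suc p))))"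
proof -
  have "P (Suc p) = P p * ((1 + Defs.mono (2*(Suc p) + 4) (2*(Suc p) + 1)) * inverse (1 - Defs.mono (2*(Suc p)) (2*(Suc p))))"
    unfolding P_def by (simp only: prod.cl_ivl_Suc) simp
  also have "Defs.mono (2*(Suc p) + 4) (2*(Suc p) + 1) = Defs.mono (2*p + 6) (2*p + 3)"
    by (rule mono_eq) simp_all
  finally show ?thesis .
qed

lemma mono_id1: "Defs.mono (2*(Suc p)^2) (2*(Suc p)*p) * (1 + Defs.mono (2*p + 6) (2*p + 3)) =
   Defs.mono (2*p^2) (2*p*(p - 1)) * (Defs.mono (4*p+2) (4*p) + Defs.mono (6*p+8) (6*p+3))"
proof -
  have e1: "Defs.mono (2*(Suc p)^2) (2*(Suc p)*p) = Defs.mono (2*p^2 + (4*p+2)) (2*p*(p - 1) + 4*p)"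
    by (rule mono_eq) (cases p, simp_all add: algebra_simps power2_eq_square)+
  have e2: "Defs.mono (2*(Suc p)^2 + (2*p + 6)) (2*(Suc p)*p + (2*p + 3)) = Defs.mono (2*p^2 + (6*p+8)) (2*p*(p - 1) + (6*p+3))"
    by (rule mono_eq) (cases p, simp_all add: algebra_simps power2_eq_square)+
  show ?thesis
    unfolding distrib_left mult_1_right mono_mult
    apply (rule arg_cong2[where f="(+)"])
    apply (rule mono_eq; cases p; simp add: algebra_simps power2_eq_square)+
    done
qed

lemma u_Suc: "u (Suc p) * (1 - Defs.mono (2*(Suc p)) (2*(Suc p))) =
   u p * (Defs.mono (4*p+2) (4*p) + Defs.mono (6*p+8) (6*p+3))"
proof -
  let ?x = "Defs.mono (2*(Suc p)) (2*(Suc p))"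
  have i: "(1 - ?x) * inverse (1 - ?x) = 1" by (rule inv1) simp
  have "u (Suc p) * (1 - ?x) = (Defs.mono (2*(Suc p)^2) (2*(Suc p)*(Suc p - 1)) * (1 + Defs.mono (2*p + 6) (2*p + 3))) * P p * ((1 - ?x) * inverse (1 - ?x))"
    unfolding u_def P_Suc by (simp only: ac_simps)
  also have "\<dots> = (Defs.mono (2*(Suc p)^2) (2*(Suc p)*p) * (1 + Defs.mono (2*p + 6) (2*p + 3))) * P p"
    unfolding i by simp
  also have "\<dots> = u p * (Defs.mono (4*p+2) (4*p) + Defs.mono (6*p+8) (6*p+3))"
    unfolding mono_id1 u_def by (simp only: ac_simps)
  finally show ?thesis .
qed

lemma u_0: "u 0 = 1" by (simp add: u_def P_def mono_00)

lemma c_0: "c m 0 = 1" by (simp add: c_def u_0 mono_00)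

lemma c_diff: "c m (Suc p) - c (Suc m) (Suc p) = b1 m * c (m+2) p + b2 m * c (m+3) p"
proof -
  let ?x = "Defs.mono (2*(Suc p)) (2*(Suc p))"
  let ?y = "Defs.mono (2*m*(Suc p)) (2*m*(Suc p))"
  have e: "?x * ?y = Defs.mono (2*(Suc m)*(Suc p)) (2*(Suc m)*(Suc p))"
    unfolding mono_mult by (rule mono_eq) (simp_all add: algebra_simps)
  have cs: "c (Suc m) (Suc p) = u (Suc p) * (?x * ?y)"
    unfolding e by (simp only: c_def)
  have cm: "c m (Suc p) = u (Suc p) * ?y" by (simp only: c_def)
  have "c m (Suc p) - c (Suc m) (Suc p) = u (Suc p) * (1 - ?x) * ?y"
    unfolding cs cm by algebra
  also have "\<dots> = u p * (Defs.mono (4*p+2) (4*p) * ?y + Defs.mono (6*p+8) (6*p+3) * ?y)"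
    unfolding u_Suc by (simp add: algebra_simps)
  also have "\<dots> = u p * (Defs.mono (2*m+2 + 2*(m+2)*p) (2*m + 2*(m+2)*p) + Defs.mono (2*m+8 + 2*(m+3)*p) (2*m+3 + 2*(m+3)*p))"
    unfolding mono_mult by (simp add: algebra_simps)
  also have "\<dots> = b1 m * c (m+2) p + b2 m * c (m+3) p"
    unfolding c_def b1_def b2_def by (simp add: algebra_simps mono_mult)
  finally show ?thesis .
qed

definition F :: "nat \<Rightarrow> nat \<Rightarrow> rat fps fps" where
  "F m N = (\<Sum>p<N. c m p)"

lemma F_rec: "F m (Suc N) = F (Suc m) (Suc N) + b1 m * F (m+2) N + b2 m * F (m+3) N"
proof -
  have "F m (Suc N) - F (Suc m) (Suc N) = (\<Sum>p<Suc N. c m p - c (Suc m) p)"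
    unfolding F_def by (simp add: sum_subtractf)
  also have "\<dots> = (\<Sum>p<N. c m (Suc p) - c (Suc m) (Suc p))"
    unfolding sum.lessThan_Suc_shift by (simp add: c_0)
  also have "\<dots> = b1 m * F (m+2) N + b2 m * F (m+3) N"
    unfolding c_diff F_def by (simp add: sum.distrib sum_distrib_left)
  finally show ?thesis by (simp add: algebra_simps)
qed



lemma c_split: "c m p = Defs.mono (2*p^2 + 2*m*p) (2*p*(p - 1) + 2*m*p) * P p"
proof -
  have "c m p = (Defs.mono (2*p^2) (2*p*(p - 1)) * Defs.mono (2*m*p) (2*m*p)) * P p"
    unfolding c_def u_def by (simp only: ac_simps)
  then show ?thesis by (simp only: mono_mult)
qed

lemma c_nth: "a < 2*p^2 + 2*m*p \<Longrightarrow> c m p $ a = 0"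
  unfolding c_split mono_nth by simp

lemma c_nth_big: "a < p \<Longrightarrow> c m p $ a = 0"
proof (rule c_nth)
  assume "a < p"
  have "p \<le> p^2" by (simp add: power2_eq_square)
  then show "a < 2*p^2 + 2*m*p" using \<open>a < p\<close> by linarith
qed

lemma c_nth_low: "0 < p \<Longrightarrow> a < 2*m+2 \<Longrightarrow> c m p $ a = 0"
proof (rule c_nth)
  assume "0 < p" "a < 2*m+2"
  have "1 \<le> p^2" using \<open>0 < p\<close> by (simp add: power2_eq_square Suc_le_eq)
  moreover have "m \<le> m*p" using \<open>0 < p\<close> by simp
  ultimately show "a < 2*p^2 + 2*m*p" using \<open>a < 2*m+2\<close> by linarith
qed

definition G :: "nat \<Rightarrow> rat fps fps" where
  "G m = Abs_fps (\<lambda>a. F m (Suc a) $ a)"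

lemma F_stable_aux: "Suc a \<le> N \<Longrightarrow> F m N $ a = F m (Suc a) $ a"
proof (induction N rule: dec_induct)
  case base then show ?case by simp
next
  case (step n)
  have "F m (Suc n) = F m n + c m n" unfolding F_def by simp
  moreover have "c m n $ a = 0" using step(1) by (intro c_nth_big) simp
  ultimately show ?case using step(3) by simp
qed

lemma F_stable: "a < N \<Longrightarrow> F m N $ a = G m $ a"
  unfolding G_def using F_stable_aux[of a N m] by simp

lemma G_low: "a < 2*m+2 \<Longrightarrow> G m $ a = (1::rat fps fps) $ a"
proof -
  assume H: "a < 2*m+2"
  have "G m $ a = F m (Suc a) $ a" unfolding G_def by simp
  also have "\<dots> = c m 0 $ a + (\<Sum>p<a. c m (Suc p) $ a)"
    unfolding F_def sum.lessThan_Suc_shift fps_add_nth fps_sum_nth ..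
  also have "(\<Sum>p<a. c m (Suc p) $ a) = 0"
    using H by (intro sum.neutral ballI c_nth_low) auto
  finally show ?thesis by (simp add: c_0)
qed

lemma G_rec: "G m = G (Suc m) + b1 m * G (m+2) + b2 m * G (m+3)"
proof (rule fps_ext)
  fix a
  let ?N = "Suc a"
  have "G m $ a = F m (Suc ?N) $ a" by (rule F_stable[symmetric]) simp
  also have "\<dots> = F (Suc m) (Suc ?N) $ a + (b1 m * F (m+2) ?N) $ a + (b2 m * F (m+3) ?N) $ a"
    by (subst F_rec) simp
  also have "F (Suc m) (Suc ?N) $ a = G (Suc m) $ a" by (rule F_stable) simp
  also have "(b1 m * F (m+2) ?N) $ a = (b1 m * G (m+2)) $ a"
    by (rule mult_cong_nth) (rule F_stable, simp)
  also have "(b2 m * F (m+3) ?N) $ a = (b2 m * G (m+3)) $ a"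
    by (rule mult_cong_nth) (rule F_stable, simp)
  finally show "G m $ a = (G (Suc m) + b1 m * G (m+2) + b2 m * G (m+3)) $ a" by simp
qed

lemma S_G: "\<forall>m a. a < 2*(m+n)+2 \<longrightarrow> S m n $ a = G m $ a"
proof (induction n rule: less_induct)
  case (less n)
  show ?case
  proof (intro allI impI)
    fix m a assume H: "a < 2*(m+n)+2"
    show "S m n $ a = G m $ a"
    proof (cases n)
      case 0 then show ?thesis using H by (simp add: S_0 G_low)
    next
      case (Suc k)
      have IH: "\<And>j m a. j < Suc k \<Longrightarrow> a < 2*(m+j)+2 \<Longrightarrow> S m j $ a = G m $ a"
        using less Suc by blast
      have A: "G (Suc m) $ a = S (Suc m) k $ a"
        by (rule IH[symmetric]) (use H Suc in simp_all)
      have B: "(b1 m * G (m+2)) $ a = (if k = 0 then b1 m else b1 m * S (m+2) (k - 1)) $ a"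
      proof (cases k)
        case 0
        have "(b1 m * G (m+2)) $ a = (b1 m * 1) $ a"
          unfolding b1_def by (rule mono_cong_nth) (rule G_low, insert H Suc 0, simp)
        then show ?thesis using 0 by simp
      next
        case (Suc k')
        have "(b1 m * G (m+2)) $ a = (b1 m * S (m+2) (k - 1)) $ a"
          unfolding b1_def by (rule mono_cong_nth) (rule IH[symmetric], insert H \<open>n = Suc k\<close> Suc, simp_all)
        then show ?thesis using Suc by simp
      qed
      have C: "(b2 m * G (m+3)) $ a = (if k = 0 then 0 else if k = 1 then b2 m else b2 m * S (m+3) (k - 2)) $ a"
      proof -
        consider "k = 0" | "k = 1" | k' where "k = Suc (Suc k')" by (metis One_nat_def not0_implies_Suc)
        then show ?thesis
        proof cases
          case 1
          have "(b2 m * G (m+3)) $ a = (b2 m * 0) $ a"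
            unfolding b2_def by (rule mono_cong_nth) (insert H Suc 1, simp)
          then show ?thesis using 1 by simp
        next
          case 2
          have "(b2 m * G (m+3)) $ a = (b2 m * 1) $ a"
            unfolding b2_def by (rule mono_cong_nth) (insert H Suc 2, simp)
          then show ?thesis using 2 by simp
        next
          case 3
          have "(b2 m * G (m+3)) $ a = (b2 m * S (m+3) (k - 2)) $ a"
            unfolding b2_def by (rule mono_cong_nth) (rule IH[symmetric], insert H \<open>n = Suc k\<close> 3, simp_all)
          then show ?thesis using 3 by simp
        qed
      qed
      have "G m $ a = G (Suc m) $ a + (b1 m * G (m+2)) $ a + (b2 m * G (m+3)) $ a"
        by (subst G_rec) (simp only: fps_add_nth)
      also have "\<dots> = S m n $ a"
        unfolding A B C Suc by (subst S_Suc) (cases "k = 0"; cases "k = 1"; simp)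
      finally show ?thesis ..
    qed
  qed
qed



lemma Kterm_eq: "Kterm p = c 0 p + b3 * c 4 p"
proof -
  have c0: "c 0 p = u p" by (simp add: c_def mono_00)
  have "b3 * c 4 p = u p * (Defs.mono 12 5 * Defs.mono (2*4*p) (2*4*p))"
    by (simp only: b3_def c_def ac_simps)
  also have "Defs.mono 12 5 * Defs.mono (2*4*p) (2*4*p) = Defs.mono (8*p + 12) (8*p + 5)"
    unfolding mono_mult by (rule mono_eq) simp_all
  finally have c4: "b3 * c 4 p = u p * Defs.mono (8*p + 12) (8*p + 5)" .
  have "Kterm p = u p + u p * Defs.mono (8*p + 12) (8*p + 5)"
    unfolding Kterm_def u_def P_def by algebra
  then show ?thesis using c0 c4 by simp
qed

lemma partial_eq: "(\<Sum>p<N. Kterm p) = F 0 N + b3 * F 4 N"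
  unfolding Kterm_eq F_def by (simp add: sum.distrib sum_distrib_left)

lemma dist_le:
  fixes f g :: "rat fps fps"
  assumes "\<And>a. a < N \<Longrightarrow> f $ a = g $ a"
  shows "dist f g \<le> inverse (2 ^ N)"
proof (cases "f = g")
  case True then show ?thesis by simp
next
  case False
  have "subdegree (f - g) \<ge> N"
    by (rule subdegree_geI) (use False assms in auto)
  then have "(2::real) ^ N \<le> 2 ^ subdegree (f - g)" by (rule power_increasing) simp
  then have "inverse ((2::real) ^ subdegree (f - g)) \<le> inverse (2 ^ N)"
    by (rule le_imp_inverse_le) simp
  then show ?thesis using False by (simp add: dist_fps_def)
qed

definition K :: "rat fps fps" where "K = G 0 + b3 * G 4"

lemma part1: "\<forall>\<^sub>F n in sequentially. Kpoly n $ a $ b = K $ a $ b"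
proof (rule eventually_sequentiallyI[of "a + 4"])
  fix n assume n: "a + 4 \<le> n"
  define k where "k = n - 4"
  have k: "n = k + 4" "a \<le> k" using n unfolding k_def by simp_all
  have "Kpoly n $ a = S 0 (k+4) $ a + (b3 * S 4 k) $ a" unfolding k(1) Kpoly_eq by (rule fps_add_nth)
  also have "S 0 (k+4) $ a = G 0 $ a" by (rule S_G[of "k+4", rule_format]) (use k in simp)
  also have "(b3 * S 4 k) $ a = (b3 * G 4) $ a"
    unfolding b3_def by (rule mono_cong_nth) (rule S_G[of k, rule_format], use k in simp)
  finally show "Kpoly n $ a $ b = K $ a $ b" unfolding K_def by simp
qed

lemma part2: "Kterm sums K"
  unfolding sums_def
proof (rule metric_LIMSEQ_I)
  fix r :: real assume r: "r > 0"
  obtain N0 where N0: "(1/2::real)^N0 < r" using reals_power_lt_ex[OF r, of 2] by auto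
  show "\<exists>no. \<forall>n\<ge>no. dist (\<Sum>p<n. Kterm p) K < r"
  proof (intro exI allI impI)
    fix n assume n: "N0 \<le> n"
    have "dist (\<Sum>p<n. Kterm p) K \<le> inverse (2 ^ n)"
    proof (rule dist_le)
      fix a assume a: "a < n"
      have "(F 0 n + b3 * F 4 n) $ a = F 0 n $ a + (b3 * F 4 n) $ a" by simp
      also have "F 0 n $ a = G 0 $ a" using a by (rule F_stable)
      also have "(b3 * F 4 n) $ a = (b3 * G 4) $ a"
        by (rule mult_cong_nth) (rule F_stable, use a in simp)
      finally show "(\<Sum>p<n. Kterm p) $ a = K $ a" unfolding partial_eq K_def by simp
    qed
    also have "inverse ((2::real) ^ n) = (1/2)^n" by (simp add: power_one_over inverse_eq_divide)
    also have "(1/2::real)^n \<le> (1/2)^N0" by (rule power_decreasing) (use n in simp_all)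
    also have "\<dots> < r" by (rule N0)
    finally show "dist (\<Sum>p<n. Kterm p) K < r" .
  qed
qed

theorem mainTheorem11:
  "\<exists>K :: rat fps fps.
     (\<forall>a b. \<forall>\<^sub>F n in sequentially. fps_nth (fps_nth (Kpoly n) a) b = fps_nth (fps_nth K a) b)
     \<and> Kterm sums K"
  using part1 part2 by blast


end
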